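(* Let $d\ge2$, $L\ge2$, $\sigma>0$ and define, with $c_1(n)=1+n\sigma^2$, $c_2(n)=1+\sigma^2(d+n)$, $c_3(\sigma,L)=16\sigma^2c_2(6)+8\sigma^2(L-1)c_1(6)+4\sigma^2(L-1)c_2(3)+\sigma^2(L-1)(L-2)c_1(6)+4c_2(8)+4(L-1)c_1(5)+2(L-1)c_2(4)+(L-1)(L-2)c_1(4)+4\sigma^2(L-1)$, and $\lambda^\star(\sigma,L)=\dfrac{2Lc_2(4)+L(L-1)c_1(4)}{c_3(\sigma,L)}$. Consider the function $\mathcal{R}^<(\kappa_0,\kappa_1)=A(\kappa_0^4+\kappa_1^4)+B(\kappa_0^2+\kappa_1^2)+C\kappa_0^2\kappa_1^2+D$ on $[-1,1]^2$ with $\lambda=\lambda^\star(\sigma,L)$. Then the points $(\pm1,\pm1)$ are global minima of $\mathcal{R}^<$ on $[-1,1]^2$.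
   Context: The constants (depending on $\lambda,\sigma,L,d$) are $A=\frac{2\lambda^2}{L^2}c_2(8)+\frac{2\lambda^2(L-1)}{L^2}c_1(5)+\frac{\lambda^2(L-1)}{L^2}c_2(4)+\frac{\lambda^2(L-1)(L-2)}{2L^2}c_1(4)$, $B=-\frac{2\lambda}{L}c_2(4)+\frac{16\lambda^2\sigma^2}{L^2}c_2(6)+\frac{8\lambda^2\sigma^2(L-1)}{L^2}c_1(6)-\frac{\lambda(L-1)}{L}c_1(4)+\frac{4\lambda^2\sigma^2(L-1)}{L^2}c_2(3)+\frac{\lambda^2\sigma^2(L-1)(L-2)}{L^2}c_1(6)$, $C=\frac{4\lambda^2\sigma^2(L-1)}{L^2}$, $D=c_1(d)-\frac{8\lambda\sigma^2}{L}c_2(2)+\frac{32\lambda^2\sigma^4}{L^2}c_2(4)+\frac{64\lambda^2\sigma^6(L-1)}{L^2}-\frac{8\lambda\sigma^4(L-1)}{L}+\frac{8\lambda^2\sigma^4(L-1)}{L^2}c_2(2)+\frac{8\lambda^2\sigma^6(L-1)(L-2)}{L^2}$. This function equals the attention risk $\mathcal{R}(\mu_0,\mu_1)=\frac1L\sum_\ell\mathbb{E}\|X_\ell-T^{\mathrm{lin},\mu_0,\mu_1}(\mathbb{X})_\ell\|^2$ on the manifold $\{(\mu_0,\mu_1)\in(\mathbb{S}^{d-1})^2:\langle\mu_1^\star,\mu_0\rangle=\langle\mu_0^\star,\mu_1\rangle=\langle\mu_0,\mu_1\rangle=0\}$, written in terms of $\kappa_0=\langle\mu_0^\star,\mu_0\rangle$,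 $\kappa_1=\langle\mu_1^\star,\mu_1\rangle$, for data i.i.d. from $\frac12\mathcal{N}(\mu_0^\star,\sigma^2I_d)+\frac12\mathcal{N}(\mu_1^\star,\sigma^2I_d)$ with orthonormal centroids, where $T^{\mathrm{lin},\mu_0,\mu_1}(\mathbb{X})_\ell=\frac{2}{L}\sum_k\lambda X_\ell^\top(\mu_0\mu_0^\top+\mu_1\mu_1^\top)X_kX_k$. *)

theory Defs
  imports Complex_Main
begin

definition c1 :: "real \<Rightarrow> real \<Rightarrow> real" where
  "c1 \<sigma> n = 1 + n * \<sigma>^2"

definition c2 :: "real \<Rightarrow> nat \<Rightarrow> real \<Rightarrow> real" where
  "c2 \<sigma> d n = 1 + \<sigma>^2 * (real d + n)"

definition c3 :: "real \<Rightarrow> nat \<Rightarrow> nat \<Rightarrow> real" where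
  "c3 \<sigma> d L = (let L = real L in
     16*\<sigma>^2*c2 \<sigma> d 6 + 8*\<sigma>^2*(L-1)*c1 \<sigma> 6 + 4*\<sigma>^2*(L-1)*c2 \<sigma> d 3
     + \<sigma>^2*(L-1)*(L-2)*c1 \<sigma> 6 + 4*c2 \<sigma> d 8 + 4*(L-1)*c1 \<sigma> 5
     + 2*(L-1)*c2 \<sigma> d 4 + (L-1)*(L-2)*c1 \<sigma> 4 + 4*\<sigma>^2*(L-1))"

definition lambda_star :: "real \<Rightarrow> nat \<Rightarrow> nat \<Rightarrow> real" where
  "lambda_star \<sigma> d L = (let L' = real L in
     (2*L'*c2 \<sigma> d 4 + L'*(L'-1)*c1 \<sigma> 4) / c3 \<sigma> d L)"

definition coefA :: "real \<Rightarrow> real \<Rightarrow> nat \<Rightarrow> nat \<Rightarrow> real" where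
  "coefA lam \<sigma> d L = (let L = real L in
     2*lam^2/L^2 * c2 \<sigma> d 8 + 2*lam^2*(L-1)/L^2 * c1 \<sigma> 5
     + lam^2*(L-1)/L^2 * c2 \<sigma> d 4 + lam^2*(L-1)*(L-2)/(2*L^2) * c1 \<sigma> 4)"

definition coefB :: "real \<Rightarrow> real \<Rightarrow> nat \<Rightarrow> nat \<Rightarrow> real" where
  "coefB lam \<sigma> d L = (let L = real L in
     - 2*lam/L * c2 \<sigma> d 4 + 16*lam^2*\<sigma>^2/L^2 * c2 \<sigma> d 6
     + 8*lam^2*\<sigma>^2*(L-1)/L^2 * c1 \<sigma> 6 - lam*(L-1)/L * c1 \<sigma> 4
     + 4*lam^2*\<sigma>^2*(L-1)/L^2 * c2 \<sigma> d 3
     + lam^2*\<sigma>^2*(L-1)*(L-2)/L^2 * c1 \<sigma> 6)"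

definition coefC :: "real \<Rightarrow> real \<Rightarrow> nat \<Rightarrow> nat \<Rightarrow> real" where
  "coefC lam \<sigma> d L = (let L = real L in 4*lam^2*\<sigma>^2*(L-1)/L^2)"

definition coefD :: "real \<Rightarrow> real \<Rightarrow> nat \<Rightarrow> nat \<Rightarrow> real" where
  "coefD lam \<sigma> d L = (let L = real L in
     c1 \<sigma> (real d) - 8*lam*\<sigma>^2/L * c2 \<sigma> d 2 + 32*lam^2*\<sigma>^4/L^2 * c2 \<sigma> d 4
     + 64*lam^2*\<sigma>^6*(L-1)/L^2 - 8*lam*\<sigma>^4*(L-1)/L
     + 8*lam^2*\<sigma>^4*(L-1)/L^2 * c2 \<sigma> d 2 + 8*lam^2*\<sigma>^6*(L-1)*(L-2)/L^2)"

definition risk_restr :: "real \<Rightarrow> real \<Rightarrow> nat \<Rightarrow> nat \<Rightarrow> real \<Rightarrow> real \<Rightarrow> real" where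
  "risk_restr lam \<sigma> d L k0 k1 =
     coefA lam \<sigma> d L * (k0^4 + k1^4) + coefB lam \<sigma> d L * (k0^2 + k1^2)
     + coefC lam \<sigma> d L * k0^2 * k1^2 + coefD lam \<sigma> d L"

end

theory Submission
  imports Defs
begin

lemma key:
  fixes A B C D x y :: real
  assumes "2*A + B + C = 0" "A \<ge> 0" "C \<ge> 0" "x \<le> 1" "y \<le> 1"
  shows "A*(1+1) + B*(1+1) + C*1*1 + D \<le> A*(x^2+y^2) + B*(x+y) + C*x*y + D"
proof -
  have "A*(x^2+y^2) + B*(x+y) + C*x*y + D - (A*(1+1) + B*(1+1) + C*1*1 + D)
        = A*(1-x)^2 + A*(1-y)^2 + C*(1-x)*(1-y)"
  proof -
    have h: "B = -2*A - C" using assms(1) by simp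
    show ?thesis unfolding h by (simp add: algebra_simps power2_eq_square)
  qed
  moreover have "C*(1-x)*(1-y) \<ge> 0" using assms by simp
  ultimately show ?thesis using assms by (smt (verit) mult_nonneg_nonneg zero_le_power2)
qed

theorem proposition10:
  fixes d L :: nat and \<sigma> :: real
  assumes "d \<ge> 2" and "L \<ge> 2" and "\<sigma> > 0"
  shows "\<forall>s0\<in>{-1, 1::real}. \<forall>s1\<in>{-1, 1::real}. \<forall>k0\<in>{-1..1}. \<forall>k1\<in>{-1..1}.
           risk_restr (lambda_star \<sigma> d L) \<sigma> d L s0 s1
             \<le> risk_restr (lambda_star \<sigma> d L) \<sigma> d L k0 k1"
proof (intro ballI)
  fix s0 s1 k0 k1 :: real
  assume s0: "s0 \<in> {-1,1}" and s1: "s1 \<in> {-1,1}" and k0: "k0 \<in> {-1..1}" and k1: "k1 \<in> {-1..1}"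
  define l where "l = lambda_star \<sigma> d L"
  define M where "M = real L"
  have M2: "M \<ge> 2" using assms(2) unfolding M_def by simp
  have s2: "\<sigma>^2 > 0" using assms(3) by simp
  have c3pos: "c3 \<sigma> d L > 0"
    unfolding c3_def c1_def c2_def Let_def using M2 s2 unfolding M_def[symmetric]
    by (intro add_pos_nonneg add_nonneg_pos; (intro mult_nonneg_nonneg add_nonneg_nonneg)?; simp)+
  have lc3: "l * c3 \<sigma> d L = 2*M*c2 \<sigma> d 4 + M*(M-1)*c1 \<sigma> 4"
    unfolding l_def lambda_star_def Let_def M_def using c3pos by simp
  have sum0: "2*coefA l \<sigma> d L + coefB l \<sigma> d L + coefC l \<sigma> d L = 0"
  proof -
    have "2*coefA l \<sigma> d L + coefB l \<sigma> d L + coefC l \<sigma> d L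
         = l/M^2 * (l * c3 \<sigma> d L - (2*M*c2 \<sigma> d 4 + M*(M-1)*c1 \<sigma> 4))"
      unfolding coefA_def coefB_def coefC_def c3_def Let_def M_def[symmetric]
      using M2 by (simp add: field_simps power2_eq_square)
    then show ?thesis using lc3 by simp
  qed
  have Ann: "coefA l \<sigma> d L \<ge> 0"
    unfolding coefA_def Let_def c1_def c2_def M_def[symmetric] using M2 s2
    by (intro add_nonneg_nonneg; (intro mult_nonneg_nonneg divide_nonneg_pos)?; simp)
  have Cnn: "coefC l \<sigma> d L \<ge> 0"
    unfolding coefC_def Let_def M_def[symmetric] using M2 s2 by simp
  have a0: "s0^2 = 1" "s0^4 = 1" using s0 by auto
  have a1: "s1^2 = 1" "s1^4 = 1" using s1 by auto
  have x: "k0^2 \<le> 1" using k0 by (simp add: abs_square_le_1 abs_le_iff)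
  have y: "k1^2 \<le> 1" using k1 by (simp add: abs_square_le_1 abs_le_iff)
  have e0: "k0^4 = (k0^2)^2" "k1^4 = (k1^2)^2" by simp_all
  have "risk_restr l \<sigma> d L k0 k1 = coefA l \<sigma> d L * ((k0^2)^2 + (k1^2)^2) + coefB l \<sigma> d L * (k0^2 + k1^2)
     + coefC l \<sigma> d L * k0^2 * k1^2 + coefD l \<sigma> d L"
    unfolding risk_restr_def by simp
  moreover have "risk_restr l \<sigma> d L s0 s1 = coefA l \<sigma> d L * (1+1) + coefB l \<sigma> d L * (1+1)
     + coefC l \<sigma> d L * 1 * 1 + coefD l \<sigma> d L"
    unfolding risk_restr_def using a0 a1 by simp
  ultimately show "risk_restr (lambda_star \<sigma> d L) \<sigma> d L s0 s1 \<le> risk_restr (lambda_star \<sigma> d L) \<sigma> d L k0 k1"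
    using key[OF sum0 Ann Cnn x y] unfolding l_def by (metis mult.assoc)
qed

end
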